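(* Let $a,b,u$ be positive integers. In coordinates $(i,j)$ with $i$ the row index (increasing downward, so "north" means decreasing $i$) and $j$ the column index (increasing eastward), a path means a lattice path with unit steps going east $(0,1)$ or north $(-1,0)$ from its SW endpoint to its NE endpoint, paths are nonintersecting if they share no vertex, and a diagonal chain of size $s$ is a set $\{(i_1,j_1),\dots,(i_s,j_s)\}$ with $i_1<\dots<i_s$ and $j_1<\dots<j_s$. (i) Assume $u\le\min(a,b)$. Let $X_p=(a-u+p,p)$ and $Y_p=(p,b-u+p)$ for $1\le p\le u$, let $R_{\rm hex}\subseteq\mathbb{R}^2$ be the closed hexagon with vertices $(1,1),X_1,X_u,(a,b),Y_u,Y_1$, and let $C\subseteq R_{\rm hex}\cap\mathbb{Z}^2$. Then there exists a collection of $u$ nonintersecting paths $H_1,\dots,H_u$, $H_p$ with endpoints $X_p$ and $Y_p$, whose union contains $C$, if and only if all diagonal chains in $C$ have size $\le u$. For (ii) and (ii') assume $C\subseteq([1,a]\times[1,b])\cap\mathbb{Z}^2$. (ii) If $u<a$, then there exists a collection of $u$ nonintersecting paths, the $p$-th with endpoints $(a-u+p,1)$ and $(p,b)$ ($1\le p\le u$), whose union contains $C$, if and only if $u\le b$ and all diagonal chains of $C$ have size $\le u$. If $u=a$, then (regardless of $b$) there exists a unique collection of $u$ nonintersecting paths, the $p$-th with endpoints $(a-u+p,1)$ and $(p,b)$, whose union contains $C$, and each of these paths is straight horizontal. (ii') If $u<b$, then there exists a collection of $u$ nonintersecting paths, the $q$-th with endpoints $(1,b-u+q)$ and $(a,q)$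 ($1\le q\le u$), whose union contains $C$, if and only if $u\le a$ and all diagonal chains of $C$ have size $\le u$. If $u=b$, then (regardless of $a$) there exists a unique collection of $u$ nonintersecting paths, the $q$-th with endpoints $(1,b-u+q)$ and $(a,q)$, whose union contains $C$, and each of these paths is straight vertical.
   Context: A path is straight horizontal if it contains no vertical edge and straight vertical if it contains no horizontal edge. All paths are in the lattice $\mathbb{Z}^2$ (for (ii), (ii') inside the grid $[1,a]\times[1,b]$). *)

theory Defs
  imports "HOL-Analysis.Analysis"
begin

text \<open>Points are (i,j) with i the row index (north = decreasing i), j the column index
  (east = increasing j).\<close>

definition lpath :: "(int \<times> int) list \<Rightarrow> bool" where
  "lpath P \<longleftrightarrow> P \<noteq> [] \<and>
     (\<forall>k. Suc k < length P \<longrightarrow>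
        (fst (P ! Suc k) = fst (P ! k) \<and> snd (P ! Suc k) = snd (P ! k) + 1) \<or>
        (fst (P ! Suc k) = fst (P ! k) - 1 \<and> snd (P ! Suc k) = snd (P ! k)))"

definition path_from_to :: "(int \<times> int) list \<Rightarrow> int \<times> int \<Rightarrow> int \<times> int \<Rightarrow> bool" where
  "path_from_to P s t \<longleftrightarrow> lpath P \<and> hd P = s \<and> last P = t"

definition straight_horizontal :: "(int \<times> int) list \<Rightarrow> bool" where
  "straight_horizontal P \<longleftrightarrow> (\<forall>k. Suc k < length P \<longrightarrow> fst (P ! Suc k) = fst (P ! k))"

definition straight_vertical :: "(int \<times> int) list \<Rightarrow> bool" where
  "straight_vertical P \<longleftrightarrow> (\<forall>k. Suc k < length P \<longrightarrow> snd (P ! Suc k) = snd (P ! k))"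

definition diag_chain :: "(int \<times> int) set \<Rightarrow> bool" where
  "diag_chain D \<longleftrightarrow> (\<forall>x\<in>D. \<forall>y\<in>D. x \<noteq> y \<longrightarrow>
      (fst x < fst y \<and> snd x < snd y) \<or> (fst y < fst x \<and> snd y < snd x))"

definition chains_bounded :: "(int \<times> int) set \<Rightarrow> nat \<Rightarrow> bool" where
  "chains_bounded C u \<longleftrightarrow> (\<forall>D. D \<subseteq> C \<longrightarrow> diag_chain D \<longrightarrow> card D \<le> u)"

definition good_family ::
  "nat \<Rightarrow> (nat \<Rightarrow> int \<times> int) \<Rightarrow> (nat \<Rightarrow> int \<times> int) \<Rightarrow> (int \<times> int) set
     \<Rightarrow> (nat \<Rightarrow> (int \<times> int) list) \<Rightarrow> bool" where
  "good_family u X Y C H \<longleftrightarrow>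
     (\<forall>p\<in>{1..u}. path_from_to (H p) (X p) (Y p)) \<and>
     (\<forall>p\<in>{1..u}. \<forall>q\<in>{1..u}. p \<noteq> q \<longrightarrow> set (H p) \<inter> set (H q) = {}) \<and>
     C \<subseteq> (\<Union>p\<in>{1..u}. set (H p))"

definition rpt :: "int \<times> int \<Rightarrow> real \<times> real" where
  "rpt x = (real_of_int (fst x), real_of_int (snd x))"

end

theory Submission
  imports Defs
begin


lemma lpath_step: assumes "lpath P" "Suc k < length P"
  shows "(fst (P ! Suc k) = fst (P ! k) \<and> snd (P ! Suc k) = snd (P ! k) + 1) \<or>
         (fst (P ! Suc k) = fst (P ! k) - 1 \<and> snd (P ! Suc k) = snd (P ! k))"
  using assms unfolding lpath_def by blast

lemma lpath_idx: assumes "lpath P" shows "k < length P \<Longrightarrow>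
   fst (P!0) - fst (P!k) + snd (P!k) - snd (P!0) = int k"
proof (induction k)
  case 0 then show ?case by simp
next
  case (Suc k)
  then show ?case using lpath_step[OF assms Suc.prems] by auto
qed

lemma lpath_mono: assumes "lpath P" shows "j \<le> k \<Longrightarrow> k < length P \<Longrightarrow>
   fst (P!k) \<le> fst (P!j) \<and> snd (P!j) \<le> snd (P!k)"
proof (induction k)
  case 0 then show ?case by simp
next
  case (Suc k)
  show ?case
  proof (cases "j = Suc k")
    case True then show ?thesis by simp
  next
    case False
    then have "j \<le> k" using Suc.prems by simp
    then show ?thesis using Suc.IH Suc.prems lpath_step[OF assms Suc.prems(2)] by auto
  qed
qed

lemma path_nc: assumes "lpath P" "x \<in> set P" "y \<in> set P"
  shows "\<not> (fst x < fst y \<and> snd x < snd y)"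
proof -
  obtain j where j: "j < length P" "x = P!j" using assms(2) by (auto simp: in_set_conv_nth)
  obtain k where k: "k < length P" "y = P!k" using assms(3) by (auto simp: in_set_conv_nth)
  show ?thesis
  proof (cases "j \<le> k")
    case True then show ?thesis using lpath_mono[OF assms(1) True k(1)] j k by auto
  next
    case False then show ?thesis using lpath_mono[OF assms(1) _ j(1), of k] j k by auto
  qed
qed

lemma lpath_last: assumes "lpath P" "k < length P"
  shows "fst (last P) \<le> fst (P!k) \<and> snd (P!k) \<le> snd (last P)"
proof -
  have "P \<noteq> []" using assms lpath_def by auto
  then have "last P = P ! (length P - 1)" by (simp add: last_conv_nth)
  then show ?thesis using lpath_mono[OF assms(1), of k "length P - 1"] assms by auto
qed

lemma lpath_len: assumes "lpath P"
  shows "fst (hd P) - fst (last P) + snd (last P) - snd (hd P) = int (length P) - 1"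
proof -
  have ne: "P \<noteq> []" using assms lpath_def by auto
  then have "last P = P ! (length P - 1)" "hd P = P ! 0" by (simp_all add: last_conv_nth hd_conv_nth)
  moreover have "int (length P - 1) = int (length P) - 1" using ne by (cases P) auto
  ultimately show ?thesis using lpath_idx[OF assms, of "length P - 1"] ne by auto
qed

lemma lpath_cons: assumes "lpath P" "hd P = (fst x - 1, snd x) \<or> hd P = (fst x, snd x + 1)"
  shows "lpath (x # P)"
proof -
  have ne: "P \<noteq> []" using assms lpath_def by auto
  show ?thesis unfolding lpath_def
  proof (intro conjI allI impI)
    fix k assume k: "Suc k < length (x # P)"
    show "fst ((x # P) ! Suc k) = fst ((x # P) ! k) \<and> snd ((x # P) ! Suc k) = snd ((x # P) ! k) + 1 \<or>
          fst ((x # P) ! Suc k) = fst ((x # P) ! k) - 1 \<and> snd ((x # P) ! Suc k) = snd ((x # P) ! k)"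
    proof (cases k)
      case 0 then show ?thesis using assms(2) ne by (auto simp: hd_conv_nth)
    next
      case (Suc k') then show ?thesis using lpath_step[OF assms(1), of k'] k by auto
    qed
  qed simp
qed

lemma necessity: assumes "good_family u X Y C H" shows "chains_bounded C u"
  unfolding chains_bounded_def
proof (intro allI impI)
  fix D assume D: "D \<subseteq> C" "diag_chain D"
  have "\<forall>d\<in>D. \<exists>p. p \<in> {1..u} \<and> d \<in> set (H p)" using assms D unfolding good_family_def by blast
  then obtain g where g: "\<forall>d\<in>D. g d \<in> {1..u} \<and> d \<in> set (H (g d))" by metis
  have "inj_on g D"
  proof (rule inj_onI)
    fix d e assume de: "d \<in> D" "e \<in> D" "g d = g e"
    show "d = e"
    proof (rule ccontr)
      assume "d \<noteq> e"
      then have "(fst d < fst e \<and> snd d < snd e) \<or> (fst e < fst d \<and> snd e < snd d)"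
        using D(2) de unfolding diag_chain_def by blast
      moreover have "lpath (H (g d))" using assms g de unfolding good_family_def path_from_to_def by blast
      ultimately show False using path_nc g de by metis
    qed
  qed
  moreover have "g ` D \<subseteq> {1..u}" using g by auto
  ultimately have "card D \<le> card {1..u}" by (intro card_inj_on_le) auto
  then show "card D \<le> u" by simp
qed



definition Qd :: "int \<times> int \<Rightarrow> (int \<times> int) set" where
  "Qd z = {c. fst c \<le> fst z \<and> snd c \<le> snd z}"
definition chs :: "(int \<times> int) set \<Rightarrow> int \<times> int \<Rightarrow> (int \<times> int) set set" where
  "chs C z = {D. D \<subseteq> C \<inter> Qd z \<and> diag_chain D}"
definition Lc :: "(int \<times> int) set \<Rightarrow> int \<times> int \<Rightarrow> nat" where
  "Lc C z = Max (card ` chs C z)"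

lemma chs_fin: "finite C \<Longrightarrow> finite (chs C z)"
  unfolding chs_def by (rule finite_subset[of _ "Pow C"]) auto

lemma chs_ne: "{} \<in> chs C z"
  unfolding chs_def diag_chain_def by auto

lemma Lc_ge: "finite C \<Longrightarrow> D \<in> chs C z \<Longrightarrow> card D \<le> Lc C z"
  unfolding Lc_def using chs_fin by (intro Max_ge) auto

lemma Lc_ex: "finite C \<Longrightarrow> \<exists>D\<in>chs C z. card D = Lc C z"
proof -
  assume "finite C"
  then have "Lc C z \<in> card ` chs C z" unfolding Lc_def using chs_fin[of C z] chs_ne[of C z]
    by (intro Max_in) auto
  then show ?thesis by auto
qed

lemma chs_fin_D: "finite C \<Longrightarrow> D \<in> chs C z \<Longrightarrow> finite D"
  unfolding chs_def by (auto intro: finite_subset)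

lemma Lc_mono: assumes "finite C" "fst z \<le> fst w" "snd z \<le> snd w"
  shows "Lc C z \<le> Lc C w"
proof -
  obtain D where D: "D \<in> chs C z" "card D = Lc C z" using Lc_ex[OF assms(1)] by blast
  have "D \<in> chs C w" using D(1) assms unfolding chs_def Qd_def by auto
  then show ?thesis using Lc_ge[OF assms(1)] D by metis
qed

lemma Lc_diag: assumes "finite C" shows "Lc C z \<le> Lc C (fst z - 1, snd z - 1) + 1"
proof -
  obtain D where D: "D \<in> chs C z" "card D = Lc C z" using Lc_ex[OF assms(1)] by blast
  have fD: "finite D" using chs_fin_D[OF assms D(1)] .
  define D' where "D' = D \<inter> Qd (fst z - 1, snd z - 1)"
  have "D' \<in> chs C (fst z - 1, snd z - 1)" using D(1) unfolding D'_def chs_def diag_chain_def by auto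
  then have c1: "card D' \<le> Lc C (fst z - 1, snd z - 1)" using Lc_ge[OF assms] by blast
  have c2: "card (D - D') \<le> 1"
  proof -
    have "\<forall>x\<in>D - D'. \<forall>y\<in>D - D'. x = y"
    proof (intro ballI, rule ccontr)
      fix x y assume xy: "x \<in> D - D'" "y \<in> D - D'" "x \<noteq> y"
      then have "(fst x < fst y \<and> snd x < snd y) \<or> (fst y < fst x \<and> snd y < snd x)"
        using D(1) unfolding chs_def diag_chain_def by blast
      moreover have "fst x \<le> fst z" "snd x \<le> snd z" "fst y \<le> fst z" "snd y \<le> snd z"
        using xy D(1) unfolding chs_def Qd_def by auto
      ultimately show False using xy unfolding D'_def Qd_def by auto
    qed
    then show ?thesis using fD by (simp add: card_le_Suc0_iff_eq)
  qed
  have "card D = card D' + card (D - D')"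
    using fD unfolding D'_def by (metis Int_Diff_disjoint Un_Int_eq(1) card_Un_disjoint finite_Diff finite_Int Int_Diff_Un)
  then show ?thesis using c1 c2 D(2) by linarith
qed

lemma Lc_C: assumes "finite C" "c \<in> C" shows "Lc C (fst c - 1, snd c - 1) + 1 \<le> Lc C c"
proof -
  obtain D where D: "D \<in> chs C (fst c - 1, snd c - 1)" "card D = Lc C (fst c - 1, snd c - 1)"
    using Lc_ex[OF assms(1)] by blast
  have fD: "finite D" using chs_fin_D[OF assms(1) D(1)] .
  have lt: "\<forall>x\<in>D. fst x < fst c \<and> snd x < snd c" using D(1) unfolding chs_def Qd_def by auto
  then have "c \<notin> D" by auto
  have "insert c D \<in> chs C c" using D(1) lt assms(2) unfolding chs_def Qd_def diag_chain_def
    by (auto; fastforce)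
  then have "card (insert c D) \<le> Lc C c" using Lc_ge[OF assms(1)] by blast
  then show ?thesis using fD \<open>c \<notin> D\<close> D(2) by simp
qed

lemma Lc_pos: assumes "finite C" "c \<in> C" shows "1 \<le> Lc C c"
  using Lc_C[OF assms] by simp

lemma Lc_bound: assumes "finite C" "chains_bounded C u" shows "Lc C z \<le> u"
  using Lc_ex[OF assms(1), of z] assms(2) unfolding chains_bounded_def chs_def by auto

lemma Lc_fst: assumes "finite C" "\<forall>c\<in>C. 1 \<le> fst c" shows "int (Lc C z) \<le> max 0 (fst z)"
proof -
  obtain D where D: "D \<in> chs C z" "card D = Lc C z" using Lc_ex[OF assms(1)] by blast
  have "inj_on fst D"
    using D(1) unfolding chs_def diag_chain_def inj_on_def by fastforce
  moreover have "fst ` D \<subseteq> {1..fst z}" using D(1) assms(2) unfolding chs_def Qd_def by force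
  ultimately have "card D \<le> card {1..fst z}" by (intro card_inj_on_le) auto
  then show ?thesis using D(2) by auto
qed

lemma Lc_snd: assumes "finite C" "\<forall>c\<in>C. 1 \<le> snd c" shows "int (Lc C z) \<le> max 0 (snd z)"
proof -
  obtain D where D: "D \<in> chs C z" "card D = Lc C z" using Lc_ex[OF assms(1)] by blast
  have "inj_on snd D"
    using D(1) unfolding chs_def diag_chain_def inj_on_def by fastforce
  moreover have "snd ` D \<subseteq> {1..snd z}" using D(1) assms(2) unfolding chs_def Qd_def by force
  ultimately have "card D \<le> card {1..snd z}" by (intro card_inj_on_le) auto
  then show ?thesis using D(2) by auto
qed



lemma bpath:
  fixes S :: "(int \<times> int) set"
  assumes cl: "\<And>z w. z \<in> S \<Longrightarrow> fst z \<le> fst w \<Longrightarrow> snd z \<le> snd w \<Longrightarrow> w \<in> S"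
  shows "s \<in> S \<Longrightarrow> (fst s - 1, snd s - 1) \<notin> S \<Longrightarrow> t \<in> S \<Longrightarrow> (fst t - 1, snd t - 1) \<notin> S \<Longrightarrow>
     fst t \<le> fst s \<Longrightarrow> snd s \<le> snd t \<Longrightarrow>
     \<exists>P. path_from_to P s t \<and> set P = {z \<in> S. (fst z - 1, snd z - 1) \<notin> S \<and>
        fst t \<le> fst z \<and> fst z \<le> fst s \<and> snd s \<le> snd z \<and> snd z \<le> snd t}"
proof (induction "nat (fst s - fst t + snd t - snd s)" arbitrary: s rule: less_induct)
  case less
  show ?case
  proof (cases "s = t")
    case True
    have "path_from_to [s] s t" using True unfolding path_from_to_def lpath_def by auto
    moreover have "set [s] = {z \<in> S. (fst z - 1, snd z - 1) \<notin> S \<and>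
        fst t \<le> fst z \<and> fst z \<le> fst s \<and> snd s \<le> snd z \<and> snd z \<le> snd t}"
      using True less.prems by (auto simp: prod_eq_iff)
    ultimately show ?thesis by blast
  next
    case False
    show ?thesis
    proof (cases "(fst s - 1, snd s) \<in> S")
      case True
      define s' where "s' = (fst s - 1, snd s)"
      have s'S: "s' \<in> S" using True s'_def by simp
      have s'd: "(fst s' - 1, snd s' - 1) \<notin> S"
      proof
        assume "(fst s' - 1, snd s' - 1) \<in> S"
        then have "(fst s - 1, snd s - 1) \<in> S" using cl[of "(fst s' - 1, snd s' - 1)" "(fst s - 1, snd s - 1)"] by (auto simp: s'_def)
        then show False using less.prems by simp
      qed
      have ts': "fst t \<le> fst s'"
      proof (rule ccontr)
        assume "\<not> fst t \<le> fst s'"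
        then have "fst t = fst s" using less.prems s'_def by auto
        then have "snd s < snd t" using False less.prems by (auto simp: prod_eq_iff)
        then have "(fst t - 1, snd t - 1) \<in> S" using s'S \<open>fst t = fst s\<close>
            cl[of s' "(fst t - 1, snd t - 1)"] by (auto simp: s'_def)
        then show False using less.prems by simp
      qed
      obtain P where P: "path_from_to P s' t" "set P = {z \<in> S. (fst z - 1, snd z - 1) \<notin> S \<and>
        fst t \<le> fst z \<and> fst z \<le> fst s' \<and> snd s' \<le> snd z \<and> snd z \<le> snd t}"
      proof -
        have m: "nat (fst s' - fst t + snd t - snd s') < nat (fst s - fst t + snd t - snd s)"
          using ts' less.prems by (simp add: s'_def)
        have "snd s' \<le> snd t" using less.prems s'_def by simp
        then show ?thesis using less.hyps[OF m s'S s'd less.prems(3,4) ts'] that by blast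
      qed
      have ne: "P \<noteq> []" using P(1) unfolding path_from_to_def lpath_def by auto
      have "path_from_to (s # P) s t" using P(1) ne lpath_cons[of P s]
        unfolding path_from_to_def by (auto simp: s'_def)
      moreover have "set (s # P) = {z \<in> S. (fst z - 1, snd z - 1) \<notin> S \<and>
        fst t \<le> fst z \<and> fst z \<le> fst s \<and> snd s \<le> snd z \<and> snd z \<le> snd t}"
      proof (rule set_eqI, rule iffI)
        fix z assume that: "z \<in> set (s # P)"
        show "z \<in> {z \<in> S. (fst z - 1, snd z - 1) \<notin> S \<and>
          fst t \<le> fst z \<and> fst z \<le> fst s \<and> snd s \<le> snd z \<and> snd z \<le> snd t}"
        proof -
          have "z = s \<or> z \<in> set P" using that by simp
          moreover have ?thesis if "z = s" using that less.prems(1,2,5,6) by simp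
          moreover have ?thesis if zP: "z \<in> set P"
          proof -
            have "z \<in> S \<and> (fst z - 1, snd z - 1) \<notin> S \<and>
               fst t \<le> fst z \<and> fst z \<le> fst s' \<and> snd s' \<le> snd z \<and> snd z \<le> snd t"
              using zP P(2) by blast
            then show ?thesis unfolding s'_def by auto
          qed
          ultimately show ?thesis by blast
        qed
      next
        fix z assume z: "z \<in> {z \<in> S. (fst z - 1, snd z - 1) \<notin> S \<and>
          fst t \<le> fst z \<and> fst z \<le> fst s \<and> snd s \<le> snd z \<and> snd z \<le> snd t}"
        show "z \<in> set (s # P)"
        proof (cases "z = s")
          case True then show ?thesis by simp
        next
          case zs: False
          have "fst z \<le> fst s'"
          proof (rule ccontr)
            assume "\<not> fst z \<le> fst s'"
            then have "fst z = fst s" using z s'_def by auto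
            then have "snd s < snd z" using zs z by (auto simp: prod_eq_iff)
            then have "(fst z - 1, snd z - 1) \<in> S" using s'S \<open>fst z = fst s\<close>
              cl[of s' "(fst z - 1, snd z - 1)"] by (auto simp: s'_def)
            then show False using z by simp
          qed
          then show ?thesis using z P(2) by (auto simp: s'_def)
        qed
      qed
      ultimately show ?thesis by blast
    next
      case nS: False
      define s' where "s' = (fst s, snd s + 1)"
      have s'S: "s' \<in> S" using less.prems(1) cl[of s s'] by (auto simp: s'_def)
      have s'd: "(fst s' - 1, snd s' - 1) \<notin> S" using nS by (simp add: s'_def)
      have ts': "snd s' \<le> snd t"
      proof (rule ccontr)
        assume "\<not> snd s' \<le> snd t"
        then have "snd t = snd s" using less.prems s'_def by auto
        then have "fst t < fst s" using False less.prems by (auto simp: prod_eq_iff)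
        then have "(fst s - 1, snd s) \<in> S" using less.prems(3) \<open>snd t = snd s\<close>
          cl[of t "(fst s - 1, snd s)"] by auto
        then show False using nS by simp
      qed
      obtain P where P: "path_from_to P s' t" "set P = {z \<in> S. (fst z - 1, snd z - 1) \<notin> S \<and>
        fst t \<le> fst z \<and> fst z \<le> fst s' \<and> snd s' \<le> snd z \<and> snd z \<le> snd t}"
      proof -
        have m: "nat (fst s' - fst t + snd t - snd s') < nat (fst s - fst t + snd t - snd s)"
          using ts' less.prems by (simp add: s'_def)
        have "fst t \<le> fst s'" using less.prems s'_def by simp
        then show ?thesis using less.hyps[OF m s'S s'd less.prems(3,4) _ ts'] that by blast
      qed
      have ne: "P \<noteq> []" using P(1) unfolding path_from_to_def lpath_def by auto
      have "path_from_to (s # P) s t" using P(1) ne lpath_cons[of P s]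
        unfolding path_from_to_def by (auto simp: s'_def)
      moreover have "set (s # P) = {z \<in> S. (fst z - 1, snd z - 1) \<notin> S \<and>
        fst t \<le> fst z \<and> fst z \<le> fst s \<and> snd s \<le> snd z \<and> snd z \<le> snd t}"
      proof (rule set_eqI, rule iffI)
        fix z assume that: "z \<in> set (s # P)"
        show "z \<in> {z \<in> S. (fst z - 1, snd z - 1) \<notin> S \<and>
          fst t \<le> fst z \<and> fst z \<le> fst s \<and> snd s \<le> snd z \<and> snd z \<le> snd t}"
        proof -
          have "z = s \<or> z \<in> set P" using that by simp
          moreover have ?thesis if "z = s" using that less.prems(1,2,5,6) by simp
          moreover have ?thesis if zP: "z \<in> set P"
          proof -
            have "z \<in> S \<and> (fst z - 1, snd z - 1) \<notin> S \<and>
               fst t \<le> fst z \<and> fst z \<le> fst s' \<and> snd s' \<le> snd z \<and> snd z \<le> snd t"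
              using zP P(2) by blast
            then show ?thesis unfolding s'_def by auto
          qed
          ultimately show ?thesis by blast
        qed
      next
        fix z assume z: "z \<in> {z \<in> S. (fst z - 1, snd z - 1) \<notin> S \<and>
          fst t \<le> fst z \<and> fst z \<le> fst s \<and> snd s \<le> snd z \<and> snd z \<le> snd t}"
        show "z \<in> set (s # P)"
        proof (cases "z = s")
          case True then show ?thesis by simp
        next
          case zs: False
          have "snd s' \<le> snd z"
          proof (rule ccontr)
            assume "\<not> snd s' \<le> snd z"
            then have "snd z = snd s" using z s'_def by auto
            then have "fst z < fst s" using zs z by (auto simp: prod_eq_iff)
            then have "(fst s - 1, snd s) \<in> S" using z \<open>snd z = snd s\<close>
              cl[of z "(fst s - 1, snd s)"] by auto
            then show False using nS by simp
          qed
          then show ?thesis using z P(2) by (auto simp: s'_def)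
        qed
      qed
      ultimately show ?thesis by blast
    qed
  qed
qed



definition Lf :: "(int \<times> int) set \<Rightarrow> (int \<times> int \<Rightarrow> int) \<Rightarrow> int \<times> int \<Rightarrow> int" where
  "Lf C f z = max (int (Lc C z)) (f z)"

lemma suff:
  assumes fin: "finite C"
  and fmono: "\<And>z w. fst z \<le> fst w \<Longrightarrow> snd z \<le> snd w \<Longrightarrow> f z \<le> f w"
  and fdiag: "\<And>z. f (fst z - 1, snd z - 1) = f z - 1"
  and XL: "\<And>p. p \<in> {1..u} \<Longrightarrow> Lf C f (X p) = int p \<and> Lf C f (fst (X p) - 1, snd (X p) - 1) < int p"
  and YL: "\<And>p. p \<in> {1..u} \<Longrightarrow> Lf C f (Y p) = int p \<and> Lf C f (fst (Y p) - 1, snd (Y p) - 1) < int p"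
  and XY: "\<And>p. p \<in> {1..u} \<Longrightarrow> fst (Y p) \<le> fst (X p) \<and> snd (X p) \<le> snd (Y p)"
  and cov: "\<And>c. c \<in> C \<Longrightarrow> \<exists>p\<in>{1..u}. Lf C f c = int p \<and> fst (Y p) \<le> fst c \<and> fst c \<le> fst (X p)
                 \<and> snd (X p) \<le> snd c \<and> snd c \<le> snd (Y p)"
  shows "\<exists>H. good_family u X Y C H"
proof -
  let ?L = "Lf C f"
  have Lmono: "?L z \<le> ?L w" if "fst z \<le> fst w" "snd z \<le> snd w" for z w
    using Lc_mono[OF fin that] fmono[OF that] unfolding Lf_def by linarith
  have Ldiag: "?L z \<le> ?L (fst z - 1, snd z - 1) + 1" for z
    using Lc_diag[OF fin, of z] fdiag[of z] unfolding Lf_def by linarith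
  have LC: "?L (fst c - 1, snd c - 1) + 1 \<le> ?L c" if "c \<in> C" for c
    using Lc_C[OF fin that] fdiag[of c] unfolding Lf_def by linarith
  define S where "S k = {z. k \<le> ?L z}" for k :: int
  have cl: "\<And>z w. z \<in> S k \<Longrightarrow> fst z \<le> fst w \<Longrightarrow> snd z \<le> snd w \<Longrightarrow> w \<in> S k" for k
    unfolding S_def using Lmono by force
  define B where "B p = {z \<in> S (int p). (fst z - 1, snd z - 1) \<notin> S (int p) \<and>
        fst (Y p) \<le> fst z \<and> fst z \<le> fst (X p) \<and> snd (X p) \<le> snd z \<and> snd z \<le> snd (Y p)}" for p
  have "\<forall>p\<in>{1..u}. \<exists>P. path_from_to P (X p) (Y p) \<and> set P = B p"
  proof
    fix p assume p: "p \<in> {1..u}"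
    show "\<exists>P. path_from_to P (X p) (Y p) \<and> set P = B p"
      unfolding B_def
      apply (rule bpath[OF cl])
      using XL[OF p] YL[OF p] XY[OF p] unfolding S_def by auto
  qed
  then obtain H where H: "\<forall>p\<in>{1..u}. path_from_to (H p) (X p) (Y p) \<and> set (H p) = B p" by metis
  have "good_family u X Y C H"
    unfolding good_family_def
  proof (intro conjI ballI impI)
    fix p assume "p \<in> {1..u}" then show "path_from_to (H p) (X p) (Y p)" using H by blast
  next
    fix p q assume pq: "p \<in> {1..u}" "q \<in> {1..u}" "p \<noteq> q"
    show "set (H p) \<inter> set (H q) = {}"
    proof (rule ccontr)
      assume "set (H p) \<inter> set (H q) \<noteq> {}"
      then obtain z where "z \<in> B p" "z \<in> B q" using H pq by auto
      then have "int p \<le> ?L z" "?L (fst z - 1, snd z - 1) < int p"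
                "int q \<le> ?L z" "?L (fst z - 1, snd z - 1) < int q"
        unfolding B_def S_def by auto
      then show False using Ldiag[of z] pq(3) by linarith
    qed
  next
    show "C \<subseteq> (\<Union>p\<in>{1..u}. set (H p))"
    proof
      fix c assume c: "c \<in> C"
      obtain p where p: "p \<in> {1..u}" "?L c = int p" "fst (Y p) \<le> fst c" "fst c \<le> fst (X p)"
        "snd (X p) \<le> snd c" "snd c \<le> snd (Y p)" using cov[OF c] by blast
      have "c \<in> B p" unfolding B_def S_def using p LC[OF c] by auto
      then show "c \<in> (\<Union>p\<in>{1..u}. set (H p))" using H p(1) by blast
    qed
  qed
  then show ?thesis by blast
qed

lemma hpath: assumes "path_from_to P (r, c) (r, m)"
  shows "length P = nat (m - c) + 1 \<and> (\<forall>k<length P. P ! k = (r, c + int k))"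
proof -
  have lp: "lpath P" and ne: "P \<noteq> []" and h: "P ! 0 = (r, c)" and l: "last P = (r, m)"
    using assms unfolding path_from_to_def lpath_def by (auto simp: hd_conv_nth)
  have A: "P ! k = (r, c + int k)" if k: "k < length P" for k
  proof -
    have "fst (P!k) \<le> r" using lpath_mono[OF lp, of 0 k] k h by auto
    moreover have "r \<le> fst (P!k)" using lpath_last[OF lp k] l by auto
    moreover have "fst (P!0) - fst (P!k) + snd (P!k) - snd (P!0) = int k" using lpath_idx[OF lp k] .
    ultimately show ?thesis using h by (auto simp: prod_eq_iff)
  qed
  have "fst (hd P) - fst (last P) + snd (last P) - snd (hd P) = int (length P) - 1"
    using lpath_len[OF lp] .
  then have "m - c = int (length P) - 1" using h l ne by (auto simp: hd_conv_nth)
  then show ?thesis using A ne by (cases "length P") auto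
qed

lemma vpath: assumes "path_from_to P (r, c) (m, c)"
  shows "length P = nat (r - m) + 1 \<and> (\<forall>k<length P. P ! k = (r - int k, c))"
proof -
  have lp: "lpath P" and ne: "P \<noteq> []" and h: "P ! 0 = (r, c)" and l: "last P = (m, c)"
    using assms unfolding path_from_to_def lpath_def by (auto simp: hd_conv_nth)
  have A: "P ! k = (r - int k, c)" if k: "k < length P" for k
  proof -
    have "c \<le> snd (P!k)" using lpath_mono[OF lp, of 0 k] k h by auto
    moreover have "snd (P!k) \<le> c" using lpath_last[OF lp k] l by auto
    moreover have "fst (P!0) - fst (P!k) + snd (P!k) - snd (P!0) = int k" using lpath_idx[OF lp k] .
    ultimately show ?thesis using h by (auto simp: prod_eq_iff)
  qed
  have "fst (hd P) - fst (last P) + snd (last P) - snd (hd P) = int (length P) - 1"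
    using lpath_len[OF lp] .
  then have "r - m = int (length P) - 1" using h l ne by (auto simp: hd_conv_nth)
  then show ?thesis using A ne by (cases "length P") auto
qed



lemma cvx_lin: "convex {x::real \<times> real. \<alpha> * fst x + \<beta> * snd x \<le> \<gamma>}"
proof -
  have "{x::real \<times> real. \<alpha> * fst x + \<beta> * snd x \<le> \<gamma>} = {x. inner (\<alpha>, \<beta>) x \<le> \<gamma>}"
    by (auto simp: inner_prod_def)
  then show ?thesis using convex_halfspace_le by metis
qed

lemma hex: assumes "rpt c \<in> convex hull {rpt (1, 1), rpt (int a - int u + 1, 1), rpt (int a, int u),
               rpt (int a, int b), rpt (int u, int b), rpt (1, int b - int u + 1)}"
  "u \<le> a" "u \<le> b" "0 < u"
  shows "1 \<le> fst c \<and> fst c \<le> int a \<and> 1 \<le> snd c \<and> snd c \<le> int b \<and>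
         fst c - snd c \<le> int a - int u \<and> snd c - fst c \<le> int b - int u"
proof -
  define K where "K = {x::real \<times> real. (-1) * fst x + 0 * snd x \<le> -1} \<inter> {x. 1 * fst x + 0 * snd x \<le> real a}
     \<inter> {x. 0 * fst x + (-1) * snd x \<le> -1} \<inter> {x. 0 * fst x + 1 * snd x \<le> real b}
     \<inter> {x. 1 * fst x + (-1) * snd x \<le> real a - real u} \<inter> {x. (-1) * fst x + 1 * snd x \<le> real b - real u}"
  have cK: "convex K" unfolding K_def by (intro convex_Int cvx_lin)
  have "{rpt (1, 1), rpt (int a - int u + 1, 1), rpt (int a, int u),
               rpt (int a, int b), rpt (int u, int b), rpt (1, int b - int u + 1)} \<subseteq> K"
    unfolding K_def rpt_def using assms(2-4) by auto
  then have "convex hull {rpt (1, 1), rpt (int a - int u + 1, 1), rpt (int a, int u),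
               rpt (int a, int b), rpt (int u, int b), rpt (1, int b - int u + 1)} \<subseteq> K"
    using cK by (rule hull_minimal)
  then have "rpt c \<in> K" using assms(1) by blast
  then have r: "real_of_int 1 \<le> real_of_int (fst c)" "real_of_int (fst c) \<le> real_of_int (int a)"
    "real_of_int 1 \<le> real_of_int (snd c)" "real_of_int (snd c) \<le> real_of_int (int b)"
    "real_of_int (fst c - snd c) \<le> real_of_int (int a - int u)"
    "real_of_int (snd c - fst c) \<le> real_of_int (int b - int u)"
    unfolding K_def rpt_def by auto
  show ?thesis using r unfolding of_int_le_iff by auto
qed

lemma forced2: assumes gf: "good_family u (\<lambda>p. (int a - int u + int p, 1)) (\<lambda>p. (int p, int b)) C H"
  and ua: "u < a" and u0: "0 < u" shows "u \<le> b"
proof (rule ccontr)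
  assume nb: "\<not> u \<le> b"
  have P: "path_from_to (H p) (int a - int u + int p, 1) (int p, int b)" if "p \<in> {1..u}" for p
    using gf that unfolding good_family_def by blast
  have disj: "set (H p) \<inter> set (H q) = {}" if "p \<in> {1..u}" "q \<in> {1..u}" "p \<noteq> q" for p q
    using gf that unfolding good_family_def by blast
  have len: "int (length (H p)) = int a - int u + int b" if "p \<in> {1..u}" for p
    using lpath_len[of "H p"] P[OF that] unfolding path_from_to_def by auto
  have claim: "\<forall>p\<in>{1..u}. k < p \<longrightarrow> k \<le> b \<longrightarrow> H p ! k = (int a - int u + int p, 1 + int k)" for k
  proof (induction k)
    case 0
    show ?case
    proof (intro ballI impI)
      fix p assume p: "p \<in> {1..u}"
      have "H p \<noteq> []" using P[OF p] unfolding path_from_to_def lpath_def by auto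
      then show "H p ! 0 = (int a - int u + int p, 1 + int 0)"
        using P[OF p] unfolding path_from_to_def by (auto simp: hd_conv_nth)
    qed
  next
    case (Suc k)
    show ?case
    proof (intro ballI impI)
      fix p assume p: "p \<in> {1..u}" and kp: "Suc k < p" and kb: "Suc k \<le> b"
      have lp: "lpath (H p)" using P[OF p] unfolding path_from_to_def by blast
      have sl: "Suc k < length (H p)" using len[OF p] kb ua by linarith
      have p1: "p - 1 \<in> {1..u}" "p - 1 \<noteq> p" using p kp by auto
      have i1: "H p ! k = (int a - int u + int p, 1 + int k)" using Suc.IH p kp kb by auto
      have i2: "H (p - 1) ! k = (int a - int u + int (p - 1), 1 + int k)"
        using Suc.IH p1 kp kb by auto
      have kl: "k < length (H (p - 1))" using len[OF p1(1)] kb ua by linarith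
      show "H p ! Suc k = (int a - int u + int p, 1 + int (Suc k))"
      proof (cases "fst (H p ! Suc k) = fst (H p ! k) - 1 \<and> snd (H p ! Suc k) = snd (H p ! k)")
        case True
        then have "H p ! Suc k = H (p - 1) ! k" using i1 i2 kp by (auto simp: prod_eq_iff of_nat_diff)
        then have "H p ! Suc k \<in> set (H p) \<inter> set (H (p - 1))" using sl kl by (metis IntI nth_mem)
        then show ?thesis using disj[OF p p1(1)] p1(2) by auto
      next
        case False
        then show ?thesis using lpath_step[OF lp sl] i1 by (auto simp: prod_eq_iff)
      qed
    qed
  qed
  have pu: "u \<in> {1..u}" using u0 by auto
  have "H u ! b = (int a - int u + int u, 1 + int b)" using claim[of b] pu nb by auto
  moreover have "b < length (H u)" using len[OF pu] ua by linarith
  moreover have "lpath (H u)" "last (H u) = (int u, int b)" using P[OF pu] unfolding path_from_to_def by auto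
  ultimately show False using lpath_last[of "H u" b] by auto
qed

lemma forced2': assumes gf: "good_family u (\<lambda>q. (int a, int q)) (\<lambda>q. (1, int b - int u + int q)) C H"
  and ub: "u < b" and u0: "0 < u" shows "u \<le> a"
proof (rule ccontr)
  assume na: "\<not> u \<le> a"
  have P: "path_from_to (H p) (int a, int p) (1, int b - int u + int p)" if "p \<in> {1..u}" for p
    using gf that unfolding good_family_def by blast
  have disj: "set (H p) \<inter> set (H q) = {}" if "p \<in> {1..u}" "q \<in> {1..u}" "p \<noteq> q" for p q
    using gf that unfolding good_family_def by blast
  have len: "int (length (H p)) = int a + int b - int u" if "p \<in> {1..u}" for p
    using lpath_len[of "H p"] P[OF that] unfolding path_from_to_def by auto
  have claim: "\<forall>q\<in>{1..u}. k + q \<le> u \<longrightarrow> k \<le> a \<longrightarrow> H q ! k = (int a - int k, int q)" for k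
  proof (induction k)
    case 0
    show ?case
    proof (intro ballI impI)
      fix p assume p: "p \<in> {1..u}"
      have "H p \<noteq> []" using P[OF p] unfolding path_from_to_def lpath_def by auto
      then show "H p ! 0 = (int a - int 0, int p)"
        using P[OF p] unfolding path_from_to_def by (auto simp: hd_conv_nth)
    qed
  next
    case (Suc k)
    show ?case
    proof (intro ballI impI)
      fix p assume p: "p \<in> {1..u}" and kp: "Suc k + p \<le> u" and kb: "Suc k \<le> a"
      have lp: "lpath (H p)" using P[OF p] unfolding path_from_to_def by blast
      have sl: "Suc k < length (H p)" using len[OF p] kb ub by linarith
      have p1: "p + 1 \<in> {1..u}" "p + 1 \<noteq> p" using p kp by auto
      have i1: "H p ! k = (int a - int k, int p)" using Suc.IH p kp kb by auto
      have i2: "H (p + 1) ! k = (int a - int k, int (p + 1))"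
        using Suc.IH p1 kp kb by auto
      have kl: "k < length (H (p + 1))" using len[OF p1(1)] kb ub by linarith
      show "H p ! Suc k = (int a - int (Suc k), int p)"
      proof (cases "fst (H p ! Suc k) = fst (H p ! k) \<and> snd (H p ! Suc k) = snd (H p ! k) + 1")
        case True
        then have "H p ! Suc k = H (p + 1) ! k" using i1 i2 by (auto simp: prod_eq_iff)
        then have "H p ! Suc k \<in> set (H p) \<inter> set (H (p + 1))" using sl kl by (metis IntI nth_mem)
        then show ?thesis using disj[OF p p1(1)] p1(2) by auto
      next
        case False
        then show ?thesis using lpath_step[OF lp sl] i1 by (auto simp: prod_eq_iff)
      qed
    qed
  qed
  have pu: "1 \<in> {1..u}" using u0 by auto
  have "H 1 ! a = (int a - int a, 1)" using claim[of a] pu na by auto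
  moreover have "a < length (H 1)" using len[OF pu] ub by linarith
  moreover have "lpath (H 1)" "last (H 1) = (1, int b - int u + 1)" using P[OF pu] unfolding path_from_to_def by auto
  ultimately show False using lpath_last[of "H 1" a] by auto
qed



lemma part1_suff:
  assumes ua: "u \<le> a" and ub: "u \<le> b" and u0: "0 < u"
  and hx: "\<forall>c\<in>C. 1 \<le> fst c \<and> fst c \<le> int a \<and> 1 \<le> snd c \<and> snd c \<le> int b \<and>
         fst c - snd c \<le> int a - int u \<and> snd c - fst c \<le> int b - int u"
  and cb: "chains_bounded C u"
  shows "\<exists>H. good_family u (\<lambda>p. (int a - int u + int p, int p))
                              (\<lambda>p. (int p, int b - int u + int p)) C H"
proof -
  have fin: "finite C"
    by (rule finite_subset[of _ "{1..int a} \<times> {1..int b}"]) (use hx in auto)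
  have L1: "int (Lc C z) \<le> max 0 (fst z)" for z using Lc_fst[OF fin] hx by auto
  have L2: "int (Lc C z) \<le> max 0 (snd z)" for z using Lc_snd[OF fin] hx by auto
  have L3: "Lc C z \<le> u" for z using Lc_bound[OF fin cb] .
  have L4: "1 \<le> Lc C c" if "c \<in> C" for c using Lc_pos[OF fin that] .
  define f where "f z = max (fst z - (int a - int u)) (snd z - (int b - int u))" for z :: "int \<times> int"
  show ?thesis
  proof (rule suff[OF fin, of f])
    show "f z \<le> f w" if "fst z \<le> fst w" "snd z \<le> snd w" for z w using that unfolding f_def by auto
    show "f (fst z - 1, snd z - 1) = f z - 1" for z unfolding f_def by auto
  next
    fix p assume p: "p \<in> {1..u}"
    let ?X = "(int a - int u + int p, int p)"
    show "Lf C f ?X = int p \<and> Lf C f (fst ?X - 1, snd ?X - 1) < int p"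
      using L2[of ?X] L2[of "(fst ?X - 1, snd ?X - 1)"] p ub unfolding Lf_def f_def by auto
  next
    fix p assume p: "p \<in> {1..u}"
    let ?X = "(int p, int b - int u + int p)"
    show "Lf C f ?X = int p \<and> Lf C f (fst ?X - 1, snd ?X - 1) < int p"
      using L1[of ?X] L1[of "(fst ?X - 1, snd ?X - 1)"] p ua unfolding Lf_def f_def by auto
  next
    fix p assume p: "p \<in> {1..u}"
    show "fst (int p, int b - int u + int p) \<le> fst (int a - int u + int p, int p) \<and>
          snd (int a - int u + int p, int p) \<le> snd (int p, int b - int u + int p)" using ua ub by auto
  next
    fix c assume c: "c \<in> C"
    define l where "l = Lf C f c"
    have l1: "1 \<le> l" using L4[OF c] unfolding l_def Lf_def by auto
    have l2: "l \<le> int u" using L3[of c] hx c unfolding l_def Lf_def f_def by auto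
    have l3: "l \<le> fst c" "l \<le> snd c" "fst c - (int a - int u) \<le> l" "snd c - (int b - int u) \<le> l"
      using L1[of c] L2[of c] hx c ua ub unfolding l_def Lf_def f_def by auto
    show "\<exists>p\<in>{1..u}. Lf C f c = int p \<and> fst (int p, int b - int u + int p) \<le> fst c \<and>
       fst c \<le> fst (int a - int u + int p, int p) \<and> snd (int a - int u + int p, int p) \<le> snd c \<and>
       snd c \<le> snd (int p, int b - int u + int p)"
      using l1 l2 l3 unfolding l_def[symmetric]
      by (intro bexI[of _ "nat l"]) auto
  qed
qed

lemma part2_lt:
  assumes ua: "u \<le> a" and ub: "u \<le> b" and u0: "0 < u"
  and hx: "\<forall>c\<in>C. 1 \<le> fst c \<and> fst c \<le> int a \<and> 1 \<le> snd c \<and> snd c \<le> int b"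
  and cb: "chains_bounded C u"
  shows "\<exists>H. good_family u (\<lambda>p. (int a - int u + int p, 1)) (\<lambda>p. (int p, int b)) C H"
proof -
  have fin: "finite C"
    by (rule finite_subset[of _ "{1..int a} \<times> {1..int b}"]) (use hx in auto)
  have L1: "int (Lc C z) \<le> max 0 (fst z)" for z using Lc_fst[OF fin] hx by auto
  have L2: "int (Lc C z) \<le> max 0 (snd z)" for z using Lc_snd[OF fin] hx by auto
  have L3: "Lc C z \<le> u" for z using Lc_bound[OF fin cb] .
  have L4: "1 \<le> Lc C c" if "c \<in> C" for c using Lc_pos[OF fin that] .
  define f where "f z = max (fst z - (int a - int u)) (min (fst z) (snd z - (int b - int u)))" for z :: "int \<times> int"
  show ?thesis
  proof (rule suff[OF fin, of f])
    show "f z \<le> f w" if "fst z \<le> fst w" "snd z \<le> snd w" for z w using that unfolding f_def by auto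
    show "f (fst z - 1, snd z - 1) = f z - 1" for z unfolding f_def by auto
  next
    fix p assume p: "p \<in> {1..u}"
    let ?X = "(int a - int u + int p, 1::int)"
    show "Lf C f ?X = int p \<and> Lf C f (fst ?X - 1, snd ?X - 1) < int p"
      using L2[of ?X] L2[of "(fst ?X - 1, snd ?X - 1)"] p ua ub unfolding Lf_def f_def by auto
  next
    fix p assume p: "p \<in> {1..u}"
    let ?X = "(int p, int b)"
    show "Lf C f ?X = int p \<and> Lf C f (fst ?X - 1, snd ?X - 1) < int p"
      using L1[of ?X] L1[of "(fst ?X - 1, snd ?X - 1)"] p ua unfolding Lf_def f_def by auto
  next
    fix p assume p: "p \<in> {1..u}"
    show "fst (int p, int b) \<le> fst (int a - int u + int p, 1::int) \<and>
          snd (int a - int u + int p, 1::int) \<le> snd (int p, int b)" using ua ub u0 by auto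
  next
    fix c assume c: "c \<in> C"
    define l where "l = Lf C f c"
    have l1: "1 \<le> l" using L4[OF c] unfolding l_def Lf_def by auto
    have l2: "l \<le> int u" using L3[of c] hx c ua ub unfolding l_def Lf_def f_def by auto
    have l3: "l \<le> fst c" "fst c - (int a - int u) \<le> l"
      using L1[of c] L2[of c] hx c ua ub unfolding l_def Lf_def f_def by auto
    show "\<exists>p\<in>{1..u}. Lf C f c = int p \<and> fst (int p, int b) \<le> fst c \<and>
       fst c \<le> fst (int a - int u + int p, 1::int) \<and> snd (int a - int u + int p, 1::int) \<le> snd c \<and>
       snd c \<le> snd (int p, int b)"
      using l1 l2 l3 hx c unfolding l_def[symmetric]
      by (intro bexI[of _ "nat l"]) auto
  qed
qed

lemma part2_eq:
  assumes ua: "u = a" and u0: "0 < u" and b0: "0 < b"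
  and hx: "\<forall>c\<in>C. 1 \<le> fst c \<and> fst c \<le> int a \<and> 1 \<le> snd c \<and> snd c \<le> int b"
  shows "\<exists>H. good_family u (\<lambda>p. (int a - int u + int p, 1)) (\<lambda>p. (int p, int b)) C H"
proof -
  have fin: "finite C"
    by (rule finite_subset[of _ "{1..int a} \<times> {1..int b}"]) (use hx in auto)
  have L1: "int (Lc C z) \<le> max 0 (fst z)" for z using Lc_fst[OF fin] hx by auto
  have L2: "int (Lc C z) \<le> max 0 (snd z)" for z using Lc_snd[OF fin] hx by auto
  have L4: "1 \<le> Lc C c" if "c \<in> C" for c using Lc_pos[OF fin that] .
  define f where "f z = fst z" for z :: "int \<times> int"
  show ?thesis
  proof (rule suff[OF fin, of f])
    show "f z \<le> f w" if "fst z \<le> fst w" "snd z \<le> snd w" for z w using that unfolding f_def by auto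
    show "f (fst z - 1, snd z - 1) = f z - 1" for z unfolding f_def by auto
  next
    fix p assume p: "p \<in> {1..u}"
    let ?X = "(int a - int u + int p, 1::int)"
    show "Lf C f ?X = int p \<and> Lf C f (fst ?X - 1, snd ?X - 1) < int p"
      using L2[of ?X] L2[of "(fst ?X - 1, snd ?X - 1)"] p ua unfolding Lf_def f_def by auto
  next
    fix p assume p: "p \<in> {1..u}"
    let ?X = "(int p, int b)"
    show "Lf C f ?X = int p \<and> Lf C f (fst ?X - 1, snd ?X - 1) < int p"
      using L1[of ?X] L1[of "(fst ?X - 1, snd ?X - 1)"] p ua unfolding Lf_def f_def by auto
  next
    fix p assume p: "p \<in> {1..u}"
    show "fst (int p, int b) \<le> fst (int a - int u + int p, 1::int) \<and>
          snd (int a - int u + int p, 1::int) \<le> snd (int p, int b)" using ua b0 u0 by auto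
  next
    fix c assume c: "c \<in> C"
    define l where "l = Lf C f c"
    have l3: "l = fst c"
      using L1[of c] hx c unfolding l_def Lf_def f_def by auto
    show "\<exists>p\<in>{1..u}. Lf C f c = int p \<and> fst (int p, int b) \<le> fst c \<and>
       fst c \<le> fst (int a - int u + int p, 1::int) \<and> snd (int a - int u + int p, 1::int) \<le> snd c \<and>
       snd c \<le> snd (int p, int b)"
      using l3 hx c ua unfolding l_def[symmetric]
      by (intro bexI[of _ "nat l"]) auto
  qed
qed

lemma part3_lt:
  assumes ua: "u \<le> a" and ub: "u \<le> b" and u0: "0 < u"
  and hx: "\<forall>c\<in>C. 1 \<le> fst c \<and> fst c \<le> int a \<and> 1 \<le> snd c \<and> snd c \<le> int b"
  and cb: "chains_bounded C u"
  shows "\<exists>H. good_family u (\<lambda>q. (int a, int q)) (\<lambda>q. (1, int b - int u + int q)) C H"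
proof -
  have fin: "finite C"
    by (rule finite_subset[of _ "{1..int a} \<times> {1..int b}"]) (use hx in auto)
  have L1: "int (Lc C z) \<le> max 0 (fst z)" for z using Lc_fst[OF fin] hx by auto
  have L2: "int (Lc C z) \<le> max 0 (snd z)" for z using Lc_snd[OF fin] hx by auto
  have L3: "Lc C z \<le> u" for z using Lc_bound[OF fin cb] .
  have L4: "1 \<le> Lc C c" if "c \<in> C" for c using Lc_pos[OF fin that] .
  define f where "f z = max (min (snd z) (fst z - (int a - int u))) (snd z - (int b - int u))" for z :: "int \<times> int"
  show ?thesis
  proof (rule suff[OF fin, of f])
    show "f z \<le> f w" if "fst z \<le> fst w" "snd z \<le> snd w" for z w using that unfolding f_def by auto
    show "f (fst z - 1, snd z - 1) = f z - 1" for z unfolding f_def by auto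
  next
    fix p assume p: "p \<in> {1..u}"
    let ?X = "(int a, int p)"
    show "Lf C f ?X = int p \<and> Lf C f (fst ?X - 1, snd ?X - 1) < int p"
      using L2[of ?X] L2[of "(fst ?X - 1, snd ?X - 1)"] p ua ub unfolding Lf_def f_def by auto
  next
    fix p assume p: "p \<in> {1..u}"
    let ?X = "(1::int, int b - int u + int p)"
    show "Lf C f ?X = int p \<and> Lf C f (fst ?X - 1, snd ?X - 1) < int p"
      using L1[of ?X] L1[of "(fst ?X - 1, snd ?X - 1)"] p ua ub unfolding Lf_def f_def by auto
  next
    fix p assume p: "p \<in> {1..u}"
    show "fst (1::int, int b - int u + int p) \<le> fst (int a, int p) \<and>
          snd (int a, int p) \<le> snd (1::int, int b - int u + int p)" using ua ub u0 by auto
  next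
    fix c assume c: "c \<in> C"
    define l where "l = Lf C f c"
    have l1: "1 \<le> l" using L4[OF c] unfolding l_def Lf_def by auto
    have l2: "l \<le> int u" using L3[of c] hx c ua ub unfolding l_def Lf_def f_def by auto
    have l3: "l \<le> snd c" "snd c - (int b - int u) \<le> l"
      using L1[of c] L2[of c] hx c ua ub unfolding l_def Lf_def f_def by auto
    show "\<exists>p\<in>{1..u}. Lf C f c = int p \<and> fst (1::int, int b - int u + int p) \<le> fst c \<and>
       fst c \<le> fst (int a, int p) \<and> snd (int a, int p) \<le> snd c \<and>
       snd c \<le> snd (1::int, int b - int u + int p)"
      using l1 l2 l3 hx c unfolding l_def[symmetric]
      by (intro bexI[of _ "nat l"]) auto
  qed
qed

lemma part3_eq:
  assumes ub: "u = b" and u0: "0 < u" and a0: "0 < a"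
  and hx: "\<forall>c\<in>C. 1 \<le> fst c \<and> fst c \<le> int a \<and> 1 \<le> snd c \<and> snd c \<le> int b"
  shows "\<exists>H. good_family u (\<lambda>q. (int a, int q)) (\<lambda>q. (1, int b - int u + int q)) C H"
proof -
  have fin: "finite C"
    by (rule finite_subset[of _ "{1..int a} \<times> {1..int b}"]) (use hx in auto)
  have L1: "int (Lc C z) \<le> max 0 (fst z)" for z using Lc_fst[OF fin] hx by auto
  have L2: "int (Lc C z) \<le> max 0 (snd z)" for z using Lc_snd[OF fin] hx by auto
  define f where "f z = snd z" for z :: "int \<times> int"
  show ?thesis
  proof (rule suff[OF fin, of f])
    show "f z \<le> f w" if "fst z \<le> fst w" "snd z \<le> snd w" for z w using that unfolding f_def by auto
    show "f (fst z - 1, snd z - 1) = f z - 1" for z unfolding f_def by auto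
  next
    fix p assume p: "p \<in> {1..u}"
    let ?X = "(int a, int p)"
    show "Lf C f ?X = int p \<and> Lf C f (fst ?X - 1, snd ?X - 1) < int p"
      using L2[of ?X] L2[of "(fst ?X - 1, snd ?X - 1)"] p unfolding Lf_def f_def by auto
  next
    fix p assume p: "p \<in> {1..u}"
    let ?X = "(1::int, int b - int u + int p)"
    show "Lf C f ?X = int p \<and> Lf C f (fst ?X - 1, snd ?X - 1) < int p"
      using L2[of ?X] L2[of "(fst ?X - 1, snd ?X - 1)"] p ub unfolding Lf_def f_def by auto
  next
    fix p assume p: "p \<in> {1..u}"
    show "fst (1::int, int b - int u + int p) \<le> fst (int a, int p) \<and>
          snd (int a, int p) \<le> snd (1::int, int b - int u + int p)" using ub a0 u0 by auto
  next
    fix c assume c: "c \<in> C"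
    define l where "l = Lf C f c"
    have l3: "l = snd c"
      using L2[of c] hx c unfolding l_def Lf_def f_def by auto
    show "\<exists>p\<in>{1..u}. Lf C f c = int p \<and> fst (1::int, int b - int u + int p) \<le> fst c \<and>
       fst c \<le> fst (int a, int p) \<and> snd (int a, int p) \<le> snd c \<and>
       snd c \<le> snd (1::int, int b - int u + int p)"
      using l3 hx c ub unfolding l_def[symmetric]
      by (intro bexI[of _ "nat l"]) auto
  qed
qed



lemma part2_uniq:
  assumes ua: "u = a"
  and g1: "good_family u (\<lambda>p. (int a - int u + int p, 1)) (\<lambda>p. (int p, int b)) C H"
  and g2: "good_family u (\<lambda>p. (int a - int u + int p, 1)) (\<lambda>p. (int p, int b)) C H'"
  shows "(\<forall>p\<in>{1..u}. H p = H' p) \<and> (\<forall>p\<in>{1..u}. straight_horizontal (H p))"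
proof -
  have P: "path_from_to (H p) (int p, 1) (int p, int b)" "path_from_to (H' p) (int p, 1) (int p, int b)"
    if "p \<in> {1..u}" for p
    using g1 g2 that ua unfolding good_family_def by auto
  show ?thesis
  proof (intro conjI ballI)
    fix p assume p: "p \<in> {1..u}"
    show "H p = H' p" using hpath[OF P(1)[OF p]] hpath[OF P(2)[OF p]] by (intro nth_equalityI) auto
  next
    fix p assume p: "p \<in> {1..u}"
    show "straight_horizontal (H p)" using hpath[OF P(1)[OF p]] unfolding straight_horizontal_def by auto
  qed
qed

lemma part3_uniq:
  assumes ub: "u = b"
  and g1: "good_family u (\<lambda>q. (int a, int q)) (\<lambda>q. (1, int b - int u + int q)) C H"
  and g2: "good_family u (\<lambda>q. (int a, int q)) (\<lambda>q. (1, int b - int u + int q)) C H'"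
  shows "(\<forall>p\<in>{1..u}. H p = H' p) \<and> (\<forall>p\<in>{1..u}. straight_vertical (H p))"
proof -
  have P: "path_from_to (H p) (int a, int p) (1, int p)" "path_from_to (H' p) (int a, int p) (1, int p)"
    if "p \<in> {1..u}" for p
    using g1 g2 that ub unfolding good_family_def by auto
  show ?thesis
  proof (intro conjI ballI)
    fix p assume p: "p \<in> {1..u}"
    show "H p = H' p" using vpath[OF P(1)[OF p]] vpath[OF P(2)[OF p]] by (intro nth_equalityI) auto
  next
    fix p assume p: "p \<in> {1..u}"
    show "straight_vertical (H p)" using vpath[OF P(1)[OF p]] unfolding straight_vertical_def by auto
  qed
qed

theorem lemma2p6:
  fixes a b u :: nat
  assumes "0 < a" and "0 < b" and "0 < u"
  shows
   "(u \<le> min a b \<longrightarrow>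
      (\<forall>C. rpt ` C \<subseteq> convex hull
              {rpt (1, 1), rpt (int a - int u + 1, 1), rpt (int a, int u),
               rpt (int a, int b), rpt (int u, int b), rpt (1, int b - int u + 1)} \<longrightarrow>
         ((\<exists>H. good_family u (\<lambda>p. (int a - int u + int p, int p))
                              (\<lambda>p. (int p, int b - int u + int p)) C H)
          \<longleftrightarrow> chains_bounded C u))) \<and>
   (\<forall>C. C \<subseteq> {1..int a} \<times> {1..int b} \<longrightarrow>
      (u < a \<longrightarrow>
        ((\<exists>H. good_family u (\<lambda>p. (int a - int u + int p, 1)) (\<lambda>p. (int p, int b)) C H)
         \<longleftrightarrow> u \<le> b \<and> chains_bounded C u)) \<and>
      (u = a \<longrightarrow>
        (\<exists>H. good_family u (\<lambda>p. (int a - int u + int p, 1)) (\<lambda>p. (int p, int b)) C H) \<and>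
        (\<forall>H H'. good_family u (\<lambda>p. (int a - int u + int p, 1)) (\<lambda>p. (int p, int b)) C H \<longrightarrow>
                 good_family u (\<lambda>p. (int a - int u + int p, 1)) (\<lambda>p. (int p, int b)) C H' \<longrightarrow>
                 (\<forall>p\<in>{1..u}. H p = H' p)) \<and>
        (\<forall>H. good_family u (\<lambda>p. (int a - int u + int p, 1)) (\<lambda>p. (int p, int b)) C H \<longrightarrow>
              (\<forall>p\<in>{1..u}. straight_horizontal (H p))))) \<and>
   (\<forall>C. C \<subseteq> {1..int a} \<times> {1..int b} \<longrightarrow>
      (u < b \<longrightarrow>
        ((\<exists>H. good_family u (\<lambda>q. (int a, int q)) (\<lambda>q. (1, int b - int u + int q)) C H)
         \<longleftrightarrow> u \<le> a \<and> chains_bounded C u)) \<and>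
      (u = b \<longrightarrow>
        (\<exists>H. good_family u (\<lambda>q. (int a, int q)) (\<lambda>q. (1, int b - int u + int q)) C H) \<and>
        (\<forall>H H'. good_family u (\<lambda>q. (int a, int q)) (\<lambda>q. (1, int b - int u + int q)) C H \<longrightarrow>
                 good_family u (\<lambda>q. (int a, int q)) (\<lambda>q. (1, int b - int u + int q)) C H' \<longrightarrow>
                 (\<forall>q\<in>{1..u}. H q = H' q)) \<and>
        (\<forall>H. good_family u (\<lambda>q. (int a, int q)) (\<lambda>q. (1, int b - int u + int q)) C H \<longrightarrow>
              (\<forall>q\<in>{1..u}. straight_vertical (H q)))))"
proof -
  note a0 = assms(1) and b0 = assms(2) and u0 = assms(3)
  have I: "u \<le> min a b \<longrightarrow>
      (\<forall>C. rpt ` C \<subseteq> convex hull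
              {rpt (1, 1), rpt (int a - int u + 1, 1), rpt (int a, int u),
               rpt (int a, int b), rpt (int u, int b), rpt (1, int b - int u + 1)} \<longrightarrow>
         ((\<exists>H. good_family u (\<lambda>p. (int a - int u + int p, int p))
                              (\<lambda>p. (int p, int b - int u + int p)) C H)
          \<longleftrightarrow> chains_bounded C u))"
  proof (intro impI allI)
    fix C assume um: "u \<le> min a b" and hC: "rpt ` C \<subseteq> convex hull
              {rpt (1, 1), rpt (int a - int u + 1, 1), rpt (int a, int u),
               rpt (int a, int b), rpt (int u, int b), rpt (1, int b - int u + 1)}"
    have hx: "\<forall>c\<in>C. 1 \<le> fst c \<and> fst c \<le> int a \<and> 1 \<le> snd c \<and> snd c \<le> int b \<and>
         fst c - snd c \<le> int a - int u \<and> snd c - fst c \<le> int b - int u"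
    proof
      fix c assume "c \<in> C"
      then have "rpt c \<in> convex hull {rpt (1, 1), rpt (int a - int u + 1, 1), rpt (int a, int u),
               rpt (int a, int b), rpt (int u, int b), rpt (1, int b - int u + 1)}" using hC by blast
      then show "1 \<le> fst c \<and> fst c \<le> int a \<and> 1 \<le> snd c \<and> snd c \<le> int b \<and>
         fst c - snd c \<le> int a - int u \<and> snd c - fst c \<le> int b - int u"
        using hex um u0 by auto
    qed
    show "(\<exists>H. good_family u (\<lambda>p. (int a - int u + int p, int p))
                              (\<lambda>p. (int p, int b - int u + int p)) C H)
          \<longleftrightarrow> chains_bounded C u"
      using necessity part1_suff[OF _ _ u0 hx] um by auto
  qed
  have II: "\<forall>C. C \<subseteq> {1..int a} \<times> {1..int b} \<longrightarrow>
      (u < a \<longrightarrow>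
        ((\<exists>H. good_family u (\<lambda>p. (int a - int u + int p, 1)) (\<lambda>p. (int p, int b)) C H)
         \<longleftrightarrow> u \<le> b \<and> chains_bounded C u)) \<and>
      (u = a \<longrightarrow>
        (\<exists>H. good_family u (\<lambda>p. (int a - int u + int p, 1)) (\<lambda>p. (int p, int b)) C H) \<and>
        (\<forall>H H'. good_family u (\<lambda>p. (int a - int u + int p, 1)) (\<lambda>p. (int p, int b)) C H \<longrightarrow>
                 good_family u (\<lambda>p. (int a - int u + int p, 1)) (\<lambda>p. (int p, int b)) C H' \<longrightarrow>
                 (\<forall>p\<in>{1..u}. H p = H' p)) \<and>
        (\<forall>H. good_family u (\<lambda>p. (int a - int u + int p, 1)) (\<lambda>p. (int p, int b)) C H \<longrightarrow>
              (\<forall>p\<in>{1..u}. straight_horizontal (H p))))"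
  proof (intro allI impI)
    fix C assume CR: "C \<subseteq> {1..int a} \<times> {1..int b}"
    have hx: "\<forall>c\<in>C. 1 \<le> fst c \<and> fst c \<le> int a \<and> 1 \<le> snd c \<and> snd c \<le> int b" using CR by auto
    have A: "u < a \<longrightarrow>
        ((\<exists>H. good_family u (\<lambda>p. (int a - int u + int p, 1)) (\<lambda>p. (int p, int b)) C H)
         \<longleftrightarrow> u \<le> b \<and> chains_bounded C u)"
      using necessity forced2[OF _ _ u0] part2_lt[OF _ _ u0 hx] by (metis less_imp_le)
    have B: "u = a \<longrightarrow>
        (\<exists>H. good_family u (\<lambda>p. (int a - int u + int p, 1)) (\<lambda>p. (int p, int b)) C H) \<and>
        (\<forall>H H'. good_family u (\<lambda>p. (int a - int u + int p, 1)) (\<lambda>p. (int p, int b)) C H \<longrightarrow>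
                 good_family u (\<lambda>p. (int a - int u + int p, 1)) (\<lambda>p. (int p, int b)) C H' \<longrightarrow>
                 (\<forall>p\<in>{1..u}. H p = H' p)) \<and>
        (\<forall>H. good_family u (\<lambda>p. (int a - int u + int p, 1)) (\<lambda>p. (int p, int b)) C H \<longrightarrow>
              (\<forall>p\<in>{1..u}. straight_horizontal (H p)))"
      using part2_eq[OF _ u0 b0 hx] part2_uniq by blast
    show "(u < a \<longrightarrow>
        ((\<exists>H. good_family u (\<lambda>p. (int a - int u + int p, 1)) (\<lambda>p. (int p, int b)) C H)
         \<longleftrightarrow> u \<le> b \<and> chains_bounded C u)) \<and>
      (u = a \<longrightarrow>
        (\<exists>H. good_family u (\<lambda>p. (int a - int u + int p, 1)) (\<lambda>p. (int p, int b)) C H) \<and>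
        (\<forall>H H'. good_family u (\<lambda>p. (int a - int u + int p, 1)) (\<lambda>p. (int p, int b)) C H \<longrightarrow>
                 good_family u (\<lambda>p. (int a - int u + int p, 1)) (\<lambda>p. (int p, int b)) C H' \<longrightarrow>
                 (\<forall>p\<in>{1..u}. H p = H' p)) \<and>
        (\<forall>H. good_family u (\<lambda>p. (int a - int u + int p, 1)) (\<lambda>p. (int p, int b)) C H \<longrightarrow>
              (\<forall>p\<in>{1..u}. straight_horizontal (H p))))"
      using A B by (rule conjI)
  qed
  have III: "\<forall>C. C \<subseteq> {1..int a} \<times> {1..int b} \<longrightarrow>
      (u < b \<longrightarrow>
        ((\<exists>H. good_family u (\<lambda>q. (int a, int q)) (\<lambda>q. (1, int b - int u + int q)) C H)
         \<longleftrightarrow> u \<le> a \<and> chains_bounded C u)) \<and>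
      (u = b \<longrightarrow>
        (\<exists>H. good_family u (\<lambda>q. (int a, int q)) (\<lambda>q. (1, int b - int u + int q)) C H) \<and>
        (\<forall>H H'. good_family u (\<lambda>q. (int a, int q)) (\<lambda>q. (1, int b - int u + int q)) C H \<longrightarrow>
                 good_family u (\<lambda>q. (int a, int q)) (\<lambda>q. (1, int b - int u + int q)) C H' \<longrightarrow>
                 (\<forall>q\<in>{1..u}. H q = H' q)) \<and>
        (\<forall>H. good_family u (\<lambda>q. (int a, int q)) (\<lambda>q. (1, int b - int u + int q)) C H \<longrightarrow>
              (\<forall>q\<in>{1..u}. straight_vertical (H q))))"
  proof (intro allI impI)
    fix C assume CR: "C \<subseteq> {1..int a} \<times> {1..int b}"
    have hx: "\<forall>c\<in>C. 1 \<le> fst c \<and> fst c \<le> int a \<and> 1 \<le> snd c \<and> snd c \<le> int b" using CR by auto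
    have A: "u < b \<longrightarrow>
        ((\<exists>H. good_family u (\<lambda>q. (int a, int q)) (\<lambda>q. (1, int b - int u + int q)) C H)
         \<longleftrightarrow> u \<le> a \<and> chains_bounded C u)"
      using necessity forced2'[OF _ _ u0] part3_lt[OF _ _ u0 hx] by (metis less_imp_le)
    have B: "u = b \<longrightarrow>
        (\<exists>H. good_family u (\<lambda>q. (int a, int q)) (\<lambda>q. (1, int b - int u + int q)) C H) \<and>
        (\<forall>H H'. good_family u (\<lambda>q. (int a, int q)) (\<lambda>q. (1, int b - int u + int q)) C H \<longrightarrow>
                 good_family u (\<lambda>q. (int a, int q)) (\<lambda>q. (1, int b - int u + int q)) C H' \<longrightarrow>
                 (\<forall>q\<in>{1..u}. H q = H' q)) \<and>
        (\<forall>H. good_family u (\<lambda>q. (int a, int q)) (\<lambda>q. (1, int b - int u + int q)) C H \<longrightarrow>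
              (\<forall>q\<in>{1..u}. straight_vertical (H q)))"
      using part3_eq[OF _ u0 a0 hx] part3_uniq by blast
    show "(u < b \<longrightarrow>
        ((\<exists>H. good_family u (\<lambda>q. (int a, int q)) (\<lambda>q. (1, int b - int u + int q)) C H)
         \<longleftrightarrow> u \<le> a \<and> chains_bounded C u)) \<and>
      (u = b \<longrightarrow>
        (\<exists>H. good_family u (\<lambda>q. (int a, int q)) (\<lambda>q. (1, int b - int u + int q)) C H) \<and>
        (\<forall>H H'. good_family u (\<lambda>q. (int a, int q)) (\<lambda>q. (1, int b - int u + int q)) C H \<longrightarrow>
                 good_family u (\<lambda>q. (int a, int q)) (\<lambda>q. (1, int b - int u + int q)) C H' \<longrightarrow>
                 (\<forall>q\<in>{1..u}. H q = H' q)) \<and>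
        (\<forall>H. good_family u (\<lambda>q. (int a, int q)) (\<lambda>q. (1, int b - int u + int q)) C H \<longrightarrow>
              (\<forall>q\<in>{1..u}. straight_vertical (H q))))"
      using A B by (rule conjI)
  qed
  show ?thesis using I II III by (intro conjI)
qed


end
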